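(* Let $\mathbb{K}\in\{\mathbb{R},\mathbb{C}\}$, let $X$ be a linear space over $\mathbb{K}$, let $\phi\colon X\times X\to\mathbb{K}$ be biadditive and let $f\colon X\to\mathbb{K}$ satisfy $$f(x+y)=f(x)f(y)-\phi(x,y)\quad\text{for all }x,y\in X.$$ Assume there exists $z_0\in X$ with $\phi(z_0,z_0)\neq 0$. Then there exists a constant $a\in\mathbb{K}\setminus\{0\}$ such that $$f(x)=a\,\phi(x,z_0)+1\quad\text{for all }x\in X,$$ and moreover $$a^2\phi(x,z_0)^2=\phi(x,x)\quad\text{for all }x\in X.$$
   Context: A map $\phi\colon X\times X\to\mathbb{K}$ is biadditive if $\phi(x+x',y)=\phi(x,y)+\phi(x',y)$ and $\phi(x,y+y')=\phi(x,y)+\phi(x,y')$ for all $x,x',y,y'\in X$ (no homogeneity is assumed). $f$ is an arbitrary function (no regularity assumed). *)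

theory Defs
  imports "HOL-Analysis.Analysis"
begin

class scaleC =
  fixes scaleC :: "complex \<Rightarrow> 'a \<Rightarrow> 'a" (infixr \<open>*\<^sub>C\<close> 75)

class complex_vector = scaleC + ab_group_add +
  assumes scaleC_add_right: "a *\<^sub>C (x + y) = a *\<^sub>C x + a *\<^sub>C y"
    and scaleC_add_left: "(a + b) *\<^sub>C x = a *\<^sub>C x + b *\<^sub>C x"
    and scaleC_scaleC: "a *\<^sub>C (b *\<^sub>C x) = (a * b) *\<^sub>C x"
    and scaleC_one: "1 *\<^sub>C x = x"

definition biadditive :: "('x::ab_group_add \<Rightarrow> 'x \<Rightarrow> 'k::ab_group_add) \<Rightarrow> bool" where
  "biadditive \<phi> \<longleftrightarrow>
     (\<forall>x x' y. \<phi> (x + x') y = \<phi> x y + \<phi> x' y) \<and>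
     (\<forall>x y y'. \<phi> x (y + y') = \<phi> x y + \<phi> x y')"

end

theory Submission
  imports Defs
begin

lemma gen:
  fixes \<phi> :: "'x::ab_group_add \<Rightarrow> 'x \<Rightarrow> 'k::field" and f :: "'x \<Rightarrow> 'k"
  assumes B: "biadditive \<phi>" and F: "\<forall>x y. f (x + y) = f x * f y - \<phi> x y" and nz: "\<phi> z0 z0 \<noteq> 0"
  shows "\<exists>a. a \<noteq> 0 \<and> (\<forall>x. f x = a * \<phi> x z0 + 1) \<and> (\<forall>x. a^2 * (\<phi> x z0)^2 = \<phi> x x)"
proof -
  have L: "\<And>x x' y. \<phi> (x + x') y = \<phi> x y + \<phi> x' y" and R: "\<And>x y y'. \<phi> x (y + y') = \<phi> x y + \<phi> x y'"
    using B unfolding biadditive_def by auto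
  have F': "\<And>x y. f (x + y) = f x * f y - \<phi> x y" using F by auto
  have p0: "\<phi> 0 y = 0" for y
  proof -
    have "\<phi> 0 y + \<phi> 0 y = \<phi> 0 y" using L[of 0 0 y] by simp
    then show ?thesis by (metis add_cancel_right_right)
  qed
  have f0: "f 0 = 1"
  proof (rule ccontr)
    assume h: "f 0 \<noteq> 1"
    have "f 0 = f 0 * f 0" using F'[of 0 0] p0 by simp
    then have "f 0 * (f 0 - 1) = 0" by (simp add: algebra_simps)
    then have "f 0 = 0" using h by simp
    have p0': "\<phi> x 0 = 0" for x
    proof -
      have "\<phi> x 0 + \<phi> x 0 = \<phi> x 0" using R[of x 0 0] by simp
      then show ?thesis by (metis add_cancel_right_right)
    qed
    have "\<And>x. f x = 0"
    proof -
      fix x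
      have "f (x + 0) = f x * f 0 - \<phi> x 0" by (rule F')
      then show "f x = 0" using \<open>f 0 = 0\<close> p0' by simp
    qed
    then have "\<phi> z0 z0 = 0" using F'[of z0 z0] by simp
    with nz show False by simp
  qed
  have key: "\<And>x y z. \<phi> x y * (f z - 1) = \<phi> y z * (f x - 1)"
  proof -
    fix x y z
    have "f ((x + y) + z) = f (x + (y + z))" by (simp add: add.assoc)
    then have "(f x * f y - \<phi> x y) * f z - (\<phi> x z + \<phi> y z) = f x * (f y * f z - \<phi> y z) - (\<phi> x y + \<phi> x z)"
      by (simp only: F' L R)
    then show "\<phi> x y * (f z - 1) = \<phi> y z * (f x - 1)" by (simp add: algebra_simps)
  qed
  define a where "a = (f z0 - 1) / \<phi> z0 z0"
  have fx: "\<And>x. f x = a * \<phi> x z0 + 1"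
  proof -
    fix x
    have "\<phi> x z0 * (f z0 - 1) = \<phi> z0 z0 * (f x - 1)" by (rule key)
    then show "f x = a * \<phi> x z0 + 1" using nz unfolding a_def by (simp add: field_simps)
  qed
  have an: "a \<noteq> 0"
  proof
    assume "a = 0"
    then have "\<And>x. f x = 1" using fx by simp
    then have "\<phi> z0 z0 = 0" using F'[of z0 z0] by simp
    with nz show False by simp
  qed
  have sq: "\<And>x. a^2 * (\<phi> x z0)^2 = \<phi> x x"
  proof -
    fix x
    have "f (x + x) = f x * f x - \<phi> x x" by (rule F')
    then have "a * (\<phi> x z0 + \<phi> x z0) + 1 = (a * \<phi> x z0 + 1) * (a * \<phi> x z0 + 1) - \<phi> x x"
      by (simp only: fx L)
    then show "a^2 * (\<phi> x z0)^2 = \<phi> x x" by (simp add: algebra_simps power2_eq_square)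
  qed
  show ?thesis using an fx sq by blast
qed

theorem theorem1:
  shows
  "(\<forall>(\<phi>::'a::real_vector \<Rightarrow> 'a \<Rightarrow> real) (f::'a \<Rightarrow> real) z0.
      biadditive \<phi> \<longrightarrow> (\<forall>x y. f (x + y) = f x * f y - \<phi> x y) \<longrightarrow> \<phi> z0 z0 \<noteq> 0 \<longrightarrow>
      (\<exists>a. a \<noteq> 0 \<and> (\<forall>x. f x = a * \<phi> x z0 + 1) \<and> (\<forall>x. a^2 * (\<phi> x z0)^2 = \<phi> x x)))
   \<and>
   (\<forall>(\<phi>::'b::complex_vector \<Rightarrow> 'b \<Rightarrow> complex) (f::'b \<Rightarrow> complex) z0.
      biadditive \<phi> \<longrightarrow> (\<forall>x y. f (x + y) = f x * f y - \<phi> x y) \<longrightarrow> \<phi> z0 z0 \<noteq> 0 \<longrightarrow>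
      (\<exists>a. a \<noteq> 0 \<and> (\<forall>x. f x = a * \<phi> x z0 + 1) \<and> (\<forall>x. a^2 * (\<phi> x z0)^2 = \<phi> x x)))"
  apply (rule conjI)
   apply (intro allI impI)
   apply (erule gen; assumption)
  apply (intro allI impI)
  apply (erule gen; assumption)
  done

end
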